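(* Let $S$ be a $d\times d$ symmetric positive semidefinite matrix and $L,U$ symmetric matrices with entries in $\mathbb{R}\cup\{\pm\infty\}$, $L_{ij}\le0\le U_{ij}$ for $i\ne j$ and $L_{ii}=U_{ii}=0$. Let $\widehat K$ be the optimum of minimizing $-\log\det K+\operatorname{tr}(SK)+\sum_{i\neq j}\max\{L_{ij}K_{ij},U_{ij}K_{ij}\}$ over positive definite $K$ (convention $\pm\infty\cdot0=0$), and let $\widehat G$ be the graph on $\{1,\dots,d\}$ with edge $ij$ ($i\neq j$) iff $\widehat K_{ij}\ne0$. For all $(i,j)$ with $\widehat K_{ij}\ne0$ (including $i=j$), define $\widehat S_{ij}=S_{ij}+L_{ij}$ if $\widehat K_{ij}<0$ and $\widehat S_{ij}=S_{ij}+U_{ij}$ if $\widehat K_{ij}>0$. Then $\widehat K$ equals the maximum likelihood estimator in the Gaussian graphical model $M(\widehat G)$ with sufficient statistics $(\widehat S_{ij})$, i.e. the unique positive definite $K$ with $K_{ij}=0$ whenever $i\ne j$ and $ij$ is not an edge of $\widehat G$, and $(K^{-1})_{ij}=\widehat S_{ij}$ whenever $\widehat K_{ij}\ne0$. *)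

theory Defs
  imports "HOL-Analysis.Analysis"
begin

definition sym_mat :: "'b ^'n^'n \<Rightarrow> bool" where
  "sym_mat A \<longleftrightarrow> (\<forall>i j. A $ i $ j = A $ j $ i)"

definition psd_mat :: "real^'n^'n \<Rightarrow> bool" where
  "psd_mat A \<longleftrightarrow> sym_mat A \<and> (\<forall>x. 0 \<le> x \<bullet> (A *v x))"

definition pd_mat :: "real^'n^'n \<Rightarrow> bool" where
  "pd_mat A \<longleftrightarrow> sym_mat A \<and> (\<forall>x. x \<noteq> 0 \<longrightarrow> 0 < x \<bullet> (A *v x))"

text \<open>The penalized objective
  -log det K + tr(SK) + sum_{i<>j} max(L_ij K_ij, U_ij K_ij),
  valued in the extended reals (in ereal, (+-infinity) * 0 = 0).\<close>

definition pen_obj :: "real^'n^'n \<Rightarrow> ereal^'n^'n \<Rightarrow> ereal^'n^'n \<Rightarrow> real^'n^'n \<Rightarrow> ereal" where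
  "pen_obj S L U K =
     ereal (- ln (det K) + trace (S ** K)) +
     (\<Sum>i\<in>UNIV. \<Sum>j\<in>UNIV - {i}.
        max (L $ i $ j * ereal (K $ i $ j)) (U $ i $ j * ereal (K $ i $ j)))"

text \<open>Sufficient statistics S-hat, defined where Khat_ij <> 0.\<close>

definition shat :: "real^'n^'n \<Rightarrow> ereal^'n^'n \<Rightarrow> ereal^'n^'n \<Rightarrow> real^'n^'n \<Rightarrow> 'n \<Rightarrow> 'n \<Rightarrow> ereal" where
  "shat S L U Khat i j =
     (if Khat $ i $ j < 0 then ereal (S $ i $ j) + L $ i $ j
      else ereal (S $ i $ j) + U $ i $ j)"

definition ggm_mle :: "('n \<Rightarrow> 'n \<Rightarrow> bool) \<Rightarrow> ('n \<Rightarrow> 'n \<Rightarrow> ereal) \<Rightarrow> real^'n^'n \<Rightarrow> bool" where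
  "ggm_mle E Sh K \<longleftrightarrow> pd_mat K \<and>
     (\<forall>i j. i \<noteq> j \<and> \<not> E i j \<longrightarrow> K $ i $ j = 0) \<and>
     (\<forall>i j. (i = j \<or> E i j) \<longrightarrow> ereal (matrix_inv K $ i $ j) = Sh i j)"

end

theory Submission
  imports Defs
begin


lemma sym_mat_transpose: "sym_mat A \<longleftrightarrow> transpose A = A"
  by (auto simp: sym_mat_def transpose_def vec_eq_iff)

definition qf :: "real^'n^'n \<Rightarrow> real^'n \<Rightarrow> real" where
  "qf M x = (\<Sum>a\<in>UNIV. \<Sum>b\<in>UNIV. x$a * M$a$b * x$b)"

lemma inner_qf: "x \<bullet> (M *v x) = qf M x"
  by (simp add: qf_def inner_vec_def matrix_vector_mult_def sum_distrib_left mult.assoc)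

lemma pd_invertible:
  fixes A :: "real^'n^'n"
  assumes "pd_mat A" shows "invertible A"
proof -
  have "\<forall>x. A *v x = 0 \<longrightarrow> x = 0"
  proof (intro allI impI)
    fix x assume "A *v x = 0"
    then have "x \<bullet> (A *v x) = 0" by simp
    then show "x = 0" using assms unfolding pd_mat_def by force
  qed
  then show ?thesis
    using matrix_left_invertible_ker invertible_left_inverse by blast
qed

lemma inv_props:
  fixes A :: "real^'n^'n"
  assumes "invertible A"
  shows "A ** matrix_inv A = mat 1" "matrix_inv A ** A = mat 1"
proof -
  have "\<exists>A'. A ** A' = mat 1 \<and> A' ** A = mat 1" using assms by (simp add: invertible_def)
  then have "A ** matrix_inv A = mat 1 \<and> matrix_inv A ** A = mat 1"
    unfolding matrix_inv_def by (rule someI_ex)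
  then show "A ** matrix_inv A = mat 1" "matrix_inv A ** A = mat 1" by auto
qed

lemma sym_inv:
  fixes A :: "real^'n^'n"
  assumes "sym_mat A" "invertible A"
  shows "sym_mat (matrix_inv A)"
proof -
  let ?B = "transpose (matrix_inv A)"
  have "?B ** A = mat 1"
    using inv_props(1)[OF assms(2)] assms(1)
    by (metis matrix_transpose_mul sym_mat_transpose transpose_mat)
  then have "?B = ?B ** (A ** matrix_inv A)" using inv_props(1)[OF assms(2)] by simp
  also have "\<dots> = matrix_inv A" using \<open>?B ** A = mat 1\<close> by (simp add: matrix_mul_assoc)
  finally show ?thesis by (simp add: sym_mat_transpose)
qed

lemma pd_inv:
  fixes A :: "real^'n^'n"
  assumes "pd_mat A"
  shows "pd_mat (matrix_inv A)"
proof -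
  have inv: "invertible A" by (rule pd_invertible[OF assms])
  have "0 < x \<bullet> (matrix_inv A *v x)" if "x \<noteq> 0" for x
  proof -
    define y where "y = matrix_inv A *v x"
    have xy: "x = A *v y"
      using inv_props(1)[OF inv] by (simp add: y_def matrix_vector_mul_assoc)
    then have "y \<noteq> 0" using that by auto
    then have "0 < y \<bullet> (A *v y)" using assms unfolding pd_mat_def by auto
    have "x \<bullet> (matrix_inv A *v x) = (A *v y) \<bullet> y" by (simp add: y_def[symmetric] xy[symmetric])
    then show ?thesis using \<open>0 < y \<bullet> (A *v y)\<close> by (simp add: inner_commute)
  qed
  then show ?thesis
    using sym_inv[OF _ inv] assms unfolding pd_mat_def by auto
qed



lemma sum_if_const: "(\<Sum>b\<in>B. if P then f b else 0) = (if P then sum f B else 0)"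
  by simp

lemma qf_add_axis:
  fixes A :: "real^'n^'n"
  assumes "sym_mat A"
  shows "qf A (x + \<alpha> *\<^sub>R axis c 1) = qf A x + 2 * \<alpha> * (\<Sum>b\<in>UNIV. A$c$b * x$b) + \<alpha>^2 * A$c$c"
proof -
  have s: "(\<Sum>a\<in>UNIV. x$a * A$a$c) = (\<Sum>b\<in>UNIV. A$c$b * x$b)"
    using assms by (simp add: sym_mat_def mult.commute)
  have e: "(x + \<alpha> *\<^sub>R axis c 1)$a * A$a$b * (x + \<alpha> *\<^sub>R axis c 1)$b =
      x$a * A$a$b * x$b + (if a = c then \<alpha> * (A$c$b * x$b) else 0)
      + (if b = c then \<alpha> * (x$a * A$a$c) else 0) + (if a = c then (if b = c then \<alpha>^2 * A$c$c else 0) else 0)" for a b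
    by (auto simp: axis_def algebra_simps power2_eq_square)
  have "qf A (x + \<alpha> *\<^sub>R axis c 1) = qf A x + \<alpha> * (\<Sum>b\<in>UNIV. A$c$b * x$b) + \<alpha> * (\<Sum>a\<in>UNIV. x$a * A$a$c) + \<alpha>^2 * A$c$c"
    unfolding qf_def e by (simp add: sum.distrib sum_distrib_left[symmetric] sum.swap[of "\<lambda>a b. if b = c then _ a else 0"] sum_if_const)
  then show ?thesis using s by simp
qed

lemma decomp_aux:
  fixes I :: "'n::finite set"
  assumes "finite I"
  shows "\<And>A::real^'n^'n. sym_mat A \<Longrightarrow> (\<forall>a b. a \<notin> I \<or> b \<notin> I \<longrightarrow> A$a$b = 0) \<Longrightarrow>
     (\<forall>x. (\<forall>b. b \<notin> I \<longrightarrow> x$b = 0) \<longrightarrow> x \<noteq> 0 \<longrightarrow> 0 < qf A x) \<Longrightarrow>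
     \<exists>w. \<forall>a b. A$a$b = (\<Sum>k\<in>I. w k $ a * w k $ b)"
  using assms
proof (induction I rule: finite_induct)
  case empty
  then show ?case by auto
next
  case (insert c I)
  fix A :: "real^'n^'n"
  assume symA: "sym_mat A" and supp: "\<forall>a b. a \<notin> insert c I \<or> b \<notin> insert c I \<longrightarrow> A$a$b = 0"
    and pd: "\<forall>x. (\<forall>b. b \<notin> insert c I \<longrightarrow> x$b = 0) \<longrightarrow> x \<noteq> 0 \<longrightarrow> 0 < qf A x"
  have Acc: "0 < A$c$c"
  proof -
    have "axis c (1::real) \<noteq> 0" by (simp add: axis_eq_0_iff)
    moreover have "\<forall>b. b \<notin> insert c I \<longrightarrow> axis c (1::real) $ b = 0" by (auto simp: axis_def)
    ultimately have "0 < qf A (axis c 1)" using pd by blast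
    moreover have "qf A (axis c 1) = A$c$c"
    proof -
      have "axis c (1::real) $ a * A$a$b * axis c 1 $ b = (if a = c then (if b = c then A$c$c else 0) else 0)" for a b
        by (simp add: axis_def)
      then show ?thesis by (simp add: qf_def sum_if_const)
    qed
    ultimately show ?thesis by simp
  qed
  define s where "s = sqrt (A$c$c)"
  have s2: "s * s = A$c$c" using Acc by (simp add: s_def)
  have spos: "s > 0" using Acc by (simp add: s_def)
  define v :: "real^'n" where "v = (\<chi> b. A$b$c / s)"
  define A' :: "real^'n^'n" where "A' = (\<chi> a b. A$a$b - v$a * v$b)"
  have symA': "sym_mat A'" using symA by (simp add: sym_mat_def A'_def mult.commute)
  have vv: "v$a * v$b = A$a$c * A$b$c / A$c$c" for a b
    by (simp add: v_def s2[symmetric])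
  have suppA': "\<forall>a b. a \<notin> I \<or> b \<notin> I \<longrightarrow> A'$a$b = 0"
  proof (intro allI impI)
    fix a b assume ab: "a \<notin> I \<or> b \<notin> I"
    show "A'$a$b = 0"
    proof (cases "a = c \<or> b = c")
      case True
      then show ?thesis using Acc symA
        by (auto simp: A'_def vv sym_mat_def)
    next
      case False
      then have "a \<notin> insert c I \<or> b \<notin> insert c I" using ab by auto
      then have "A$a$b = 0" "A$a$c = 0 \<or> A$b$c = 0" using supp by auto
      then show ?thesis by (auto simp: A'_def vv)
    qed
  qed
  have pdA': "\<forall>x. (\<forall>b. b \<notin> I \<longrightarrow> x$b = 0) \<longrightarrow> x \<noteq> 0 \<longrightarrow> 0 < qf A' x"
  proof (intro allI impI)
    fix x :: "real^'n" assume xs: "\<forall>b. b \<notin> I \<longrightarrow> x$b = 0" and x0: "x \<noteq> 0"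
    define r where "r = (\<Sum>b\<in>UNIV. A$c$b * x$b)"
    define y where "y = x + (- r / A$c$c) *\<^sub>R axis c 1"
    have ys: "\<forall>b. b \<notin> insert c I \<longrightarrow> y$b = 0" using xs by (auto simp: y_def axis_def)
    obtain b where "x$b \<noteq> 0" using x0 by (auto simp: vec_eq_iff)
    then have "b \<in> I" using xs by auto
    then have "b \<noteq> c" using insert.hyps by auto
    then have "y$b \<noteq> 0" using \<open>x$b \<noteq> 0\<close> by (simp add: y_def axis_def)
    then have "y \<noteq> 0" by auto
    then have "0 < qf A y" using pd ys by blast
    also have "qf A y = qf A x + 2 * (- r / A$c$c) * r + (- r / A$c$c)^2 * A$c$c"
      unfolding y_def qf_add_axis[OF symA] r_def ..
    also have "\<dots> = qf A x - r^2 / A$c$c" using Acc by (simp add: field_simps power2_eq_square)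
    also have "qf A x - r^2 / A$c$c = qf A' x"
    proof -
      have "(\<Sum>a\<in>UNIV. x$a * v$a) = r / s"
        using symA by (simp add: r_def v_def sum_divide_distrib sym_mat_def mult.commute)
      moreover have "qf A' x = qf A x - (\<Sum>a\<in>UNIV. x$a * v$a) * (\<Sum>b\<in>UNIV. x$b * v$b)"
        by (simp add: qf_def A'_def sum_product algebra_simps sum_subtractf)
      ultimately show ?thesis using s2 spos by (simp add: power2_eq_square)
    qed
    finally show "0 < qf A' x" .
  qed
  obtain w' where w': "\<forall>a b. A'$a$b = (\<Sum>k\<in>I. w' k $ a * w' k $ b)"
    using insert.IH[OF symA' suppA' pdA'] by blast
  define w where "w = w'(c := v)"
  have "A$a$b = (\<Sum>k\<in>insert c I. w k $ a * w k $ b)" for a b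
  proof -
    have "(\<Sum>k\<in>I. w k $ a * w k $ b) = (\<Sum>k\<in>I. w' k $ a * w' k $ b)"
      using insert.hyps by (intro sum.cong) (auto simp: w_def)
    then show ?thesis using insert.hyps w'[rule_format, of a b]
      by (simp add: w_def A'_def)
  qed
  then show "\<exists>w. \<forall>a b. A$a$b = (\<Sum>k\<in>insert c I. w k $ a * w k $ b)" by blast
qed


lemma pd_decomp:
  fixes A :: "real^'n^'n"
  assumes "pd_mat A"
  shows "\<exists>W::real^'n^'n. A = W ** transpose W"
proof -
  have "\<exists>w. \<forall>a b. A$a$b = (\<Sum>k\<in>(UNIV::'n set). w k $ a * w k $ b)"
    by (rule decomp_aux) (use assms in \<open>auto simp: pd_mat_def inner_qf\<close>)
  then obtain w where w: "\<forall>a b. A$a$b = (\<Sum>k\<in>(UNIV::'n set). w k $ a * w k $ b)" by blast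
  define W :: "real^'n^'n" where "W = (\<chi> a k. w k $ a)"
  have "A = W ** transpose W"
    by (simp add: vec_eq_iff W_def matrix_matrix_mult_def transpose_def w)
  then show ?thesis by blast
qed

lemma pd_det_pos:
  fixes A :: "real^'n^'n"
  assumes "pd_mat A"
  shows "0 < det A"
proof -
  obtain W :: "real^'n^'n" where W: "A = W ** transpose W" using pd_decomp[OF assms] by blast
  have "det A \<noteq> 0" using pd_invertible[OF assms] invertible_det_nz by blast
  moreover have "det A = (det W)^2" by (simp add: W det_mul power2_eq_square)
  ultimately show ?thesis by simp
qed



lemma trace_qf:
  fixes B Z :: "real^'n^'n"
  shows "trace (transpose Z ** B ** Z) = (\<Sum>k\<in>UNIV. qf B (\<chi> i. Z$i$k))"
  unfolding trace_def qf_def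
  apply (simp add: matrix_matrix_mult_def transpose_def sum_distrib_left sum_distrib_right algebra_simps)
  apply (rule sum.cong[OF refl])
  apply (subst sum.swap)
  apply (simp add: algebra_simps)
  done

lemma qf_nonneg: "pd_mat B \<Longrightarrow> 0 \<le> qf B x"
  unfolding pd_mat_def inner_qf[symmetric]
  by (cases "x = 0") (auto intro: less_imp_le)

lemma trace_pos_unique:
  fixes A B D :: "real^'n^'n"
  assumes A: "pd_mat A" and B: "pd_mat B" and D: "sym_mat D"
    and tr: "trace ((A ** D ** B) ** transpose D) = 0"
  shows "D = 0"
proof -
  obtain W :: "real^'n^'n" where W: "A = W ** transpose W" using pd_decomp[OF A] by blast
  define Z where "Z = D ** W"
  have DT: "transpose D = D" using D by (simp add: sym_mat_transpose)
  have "trace ((A ** D ** B) ** transpose D) = trace (W ** (transpose W ** D ** B ** D))"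
    by (simp add: W DT matrix_mul_assoc)
  also have "\<dots> = trace ((transpose W ** D ** B ** D) ** W)" by (rule trace_mul_sym)
  also have "\<dots> = trace (transpose Z ** B ** Z)"
    by (simp add: Z_def matrix_transpose_mul DT matrix_mul_assoc)
  finally have "(\<Sum>k\<in>UNIV. qf B (\<chi> i. Z$i$k)) = 0" using tr trace_qf by metis
  then have "\<forall>k\<in>UNIV. qf B (\<chi> i. Z$i$k) = 0"
    by (subst (asm) sum_nonneg_eq_0_iff) (auto intro: qf_nonneg[OF B])
  then have "(\<chi> i. Z$i$k) = 0" for k
    using B unfolding pd_mat_def inner_qf by force
  then have Z0: "Z = 0" by (simp add: vec_eq_iff)
  have "D ** A = 0" by (simp add: W matrix_mul_assoc Z_def[symmetric] Z0)
  have inv: "invertible A" by (rule pd_invertible[OF A])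
  have "D = D ** (A ** matrix_inv A)" using inv_props(1)[OF inv] by simp
  also have "\<dots> = 0" by (simp add: matrix_mul_assoc \<open>D ** A = 0\<close>)
  finally show ?thesis .
qed



lemma perm_nonid_prod_zero:
  assumes "p permutes (UNIV::'n::finite set)" "p \<noteq> id"
  shows "(\<Prod>j\<in>UNIV - {i}. (if j = p j then 1 else 0 :: real)) = 0"
proof -
  obtain j0 where j0: "p j0 \<noteq> j0" using assms(2) by (auto simp: fun_eq_iff)
  have "\<exists>j\<in>UNIV - {i}. p j \<noteq> j"
  proof (cases "j0 = i")
    case False then show ?thesis using j0 by blast
  next
    case True
    have "p (p i) \<noteq> p i"
    proof
      assume "p (p i) = p i"
      then have "p i = i" using permutes_inj[OF assms(1)] by (auto dest: injD)
      then show False using j0 True by simp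
    qed
    moreover have "p i \<noteq> i" using j0 True by simp
    ultimately show ?thesis by force
  qed
  then obtain j where j: "j \<in> UNIV - {i}" "p j \<noteq> j" by blast
  show ?thesis
    apply (rule prod_zero)
     apply simp
    apply (rule bexI[of _ j])
    using j by auto
qed

lemma deriv_det_id:
  fixes M :: "real^'n^'n"
  shows "((\<lambda>t. det (mat 1 + t *\<^sub>R M)) has_real_derivative trace M) (at 0)"
proof -
  let ?P = "{p. p permutes (UNIV::'n set)}"
  have ent: "(mat 1 + t *\<^sub>R M)$i$j = (if i = j then 1 else 0) + t * M$i$j" for t i j
    by (simp add: mat_def)
  have eq: "det (mat 1 + t *\<^sub>R M) = (\<Sum>p\<in>?P. of_int (sign p) *
      (\<Prod>i\<in>UNIV. (if i = p i then 1 else 0) + t * M$i$(p i)))" for t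
    unfolding det_def ent ..
  have "((\<lambda>t. \<Sum>p\<in>?P. of_int (sign p) * (\<Prod>i\<in>UNIV. (if i = p i then 1 else 0) + t * M$i$(p i)))
     has_real_derivative (\<Sum>p\<in>?P. of_int (sign p) *
        (\<Sum>i\<in>UNIV. M$i$(p i) * (\<Prod>j\<in>UNIV - {i}. (if j = p j then 1 else 0) + 0 * M$j$(p j))))) (at 0)"
    by (intro DERIV_sum DERIV_cmult has_field_derivative_prod) (auto intro!: derivative_eq_intros)
  moreover have "(\<Sum>p\<in>?P. of_int (sign p) *
        (\<Sum>i\<in>UNIV. M$i$(p i) * (\<Prod>j\<in>UNIV - {i}. (if j = p j then 1 else 0) + 0 * M$j$(p j)))) = trace M"
  proof -
    have "(\<Sum>p\<in>?P. of_int (sign p) *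
        (\<Sum>i\<in>UNIV. M$i$(p i) * (\<Prod>j\<in>UNIV - {i}. (if j = p j then 1 else 0) + 0 * M$j$(p j))))
      = (\<Sum>p\<in>?P. if p = id then trace M else 0)"
    proof (rule sum.cong[OF refl])
      fix p assume p: "p \<in> ?P"
      show "of_int (sign p) * (\<Sum>i\<in>UNIV. M$i$(p i) * (\<Prod>j\<in>UNIV - {i}. (if j = p j then 1 else 0) + 0 * M$j$(p j)))
          = (if p = id then trace M else 0)"
      proof (cases "p = id")
        case True then show ?thesis by (simp add: sign_id trace_def)
      next
        case False
        have z: "(\<Prod>j\<in>UNIV - {i}. (if j = p j then 1 else 0 :: real)) = 0" for i
          by (rule perm_nonid_prod_zero) (use p False in auto)
        have zz: "(\<Sum>i\<in>UNIV. M$i$(p i) * (\<Prod>j\<in>UNIV - {i}. (if j = p j then 1 else 0 :: real))) = 0"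
          by (simp only: z mult_zero_right sum.neutral_const)
        show ?thesis using False by (simp add: zz)
      qed
    qed
    also have "\<dots> = trace M" using permutes_id[of "UNIV::'n set"] by (simp add: sum.delta')
    finally show ?thesis .
  qed
  ultimately show ?thesis unfolding eq by (rule DERIV_cong)
qed

lemma pd_perturb:
  fixes A E :: "real^'n^'n"
  assumes A: "pd_mat A" and E: "sym_mat E"
  shows "\<exists>\<delta>>0. \<forall>t. \<bar>t\<bar> < \<delta> \<longrightarrow> pd_mat (A + t *\<^sub>R E)"
proof -
  let ?f = "\<lambda>x::real^'n. x \<bullet> (A *v x)"
  have ne: "sphere (0::real^'n) 1 \<noteq> {}" by simp
  have cont: "continuous_on (sphere 0 1) ?f"
    by (intro continuous_intros matrix_vector_mult_linear_continuous_on continuous_on_inner) 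
  obtain x0 where x0: "x0 \<in> sphere 0 1" and min: "\<forall>y\<in>sphere 0 1. ?f x0 \<le> ?f y"
    using continuous_attains_inf[OF compact_sphere ne cont] by blast
  define m where "m = ?f x0"
  have "x0 \<noteq> 0" using x0 by auto
  then have m0: "m > 0" using A unfolding pd_mat_def m_def by auto
  obtain C where C: "C > 0" "\<forall>x. norm (E *v x) \<le> norm x * C"
    using bounded_linear.pos_bounded[OF matrix_vector_mul_bounded_linear[of E]] by blast
  have lower: "?f x \<ge> m * (norm x)^2" for x
  proof (cases "x = 0")
    case True then show ?thesis by simp
  next
    case False
    define u where "u = (1 / norm x) *\<^sub>R x"
    have "u \<in> sphere 0 1" using False by (simp add: u_def)
    then have "m \<le> ?f u" using min m_def by auto
    moreover have "?f x = (norm x)^2 * ?f u"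
      using False by (simp add: u_def matrix_vector_mult_scaleR power2_eq_square field_simps)
    ultimately show ?thesis by (metis mult.commute mult_right_mono zero_le_power2)
  qed
  have upper: "\<bar>x \<bullet> (E *v x)\<bar> \<le> C * (norm x)^2" for x
  proof -
    have "\<bar>x \<bullet> (E *v x)\<bar> \<le> norm x * norm (E *v x)" by (rule Cauchy_Schwarz_ineq2)
    also have "\<dots> \<le> norm x * (norm x * C)" using C by (simp add: mult_left_mono)
    finally show ?thesis by (simp add: power2_eq_square mult.commute mult.left_commute)
  qed
  show ?thesis
  proof (intro exI[of _ "m / C"] conjI allI impI)
    show "0 < m / C" using m0 C by simp
    fix t assume t: "\<bar>t\<bar> < m / C"
    have "sym_mat (A + t *\<^sub>R E)" using A E by (simp add: sym_mat_def pd_mat_def)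
    moreover have "0 < x \<bullet> ((A + t *\<^sub>R E) *v x)" if "x \<noteq> 0" for x
    proof -
      have n: "0 < (norm x)^2" using that by simp
      have "\<bar>t\<bar> * C < m" using t C by (simp add: field_simps)
      then have "\<bar>t\<bar> * C * (norm x)^2 < m * (norm x)^2" using n by simp
      moreover have "\<bar>t * (x \<bullet> (E *v x))\<bar> \<le> \<bar>t\<bar> * C * (norm x)^2"
        using upper[of x] by (simp add: abs_mult mult.assoc mult_left_mono)
      moreover have "x \<bullet> ((A + t *\<^sub>R E) *v x) = ?f x + t * (x \<bullet> (E *v x))"
        by (simp add: matrix_vector_mult_add_rdistrib scaleR_matrix_vector_assoc[symmetric] inner_add_right)
      ultimately show ?thesis using lower[of x] by linarith
    qed
    ultimately show "pd_mat (A + t *\<^sub>R E)" unfolding pd_mat_def by auto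
  qed
qed



lemma max_nonneg:
  fixes l u :: ereal
  assumes "l \<le> 0" "0 \<le> u"
  shows "0 \<le> max (l * ereal y) (u * ereal y)"
proof (cases "y \<ge> 0")
  case True
  then have "0 \<le> u * ereal y" using assms by (cases u) auto
  then show ?thesis by (rule order_trans) simp
next
  case False
  then have "0 \<le> l * ereal y" using assms
    by (cases l) (auto simp: zero_le_mult_iff)
  then show ?thesis by (rule order_trans) simp
qed

definition cf :: "ereal \<Rightarrow> ereal \<Rightarrow> real \<Rightarrow> real" where
  "cf l u k = (if k > 0 then real_of_ereal u else if k < 0 then real_of_ereal l else 0)"

lemma term_eq:
  fixes l u :: ereal
  assumes "l \<le> 0" "0 \<le> u" "max (l * ereal k) (u * ereal k) \<noteq> \<infinity>"
    and "k > 0 \<Longrightarrow> y > 0" "k < 0 \<Longrightarrow> y < 0" "k = 0 \<Longrightarrow> y = 0"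
  shows "max (l * ereal y) (u * ereal y) = ereal (cf l u k * y)"
proof -
  consider "k > 0" | "k < 0" | "k = 0" by linarith
  then show ?thesis
  proof cases
    case 1
    then have y: "y > 0" using assms by auto
    have "u \<noteq> \<infinity>" using assms(3) 1 by auto
    then obtain u' where u': "u = ereal u'" "u' \<ge> 0" using assms(2) by (cases u) auto
    have "l * ereal y \<le> 0" using assms(1) y by (cases l) (auto simp: mult_nonpos_nonneg)
    moreover have "0 \<le> u * ereal y" using u' y by simp
    ultimately have "l * ereal y \<le> u * ereal y" by (rule order_trans)
    then have "max (l * ereal y) (u * ereal y) = u * ereal y" by (rule max_absorb2)
    then show ?thesis using u' 1 by (simp add: cf_def)
  next
    case 2
    then have y: "y < 0" using assms by auto
    have "l \<noteq> -\<infinity>" using assms(3) 2 assms(2)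
      by (cases u) (auto simp: max_def split: if_splits)
    then obtain l' where l': "l = ereal l'" "l' \<le> 0" using assms(1) by (cases l) auto
    have "u * ereal y \<le> 0" using assms(2) y by (cases u) (auto simp: mult_nonneg_nonpos)
    moreover have "0 \<le> l * ereal y" using l' y by (simp add: mult_nonpos_nonpos)
    ultimately have "u * ereal y \<le> l * ereal y" by (rule order_trans)
    then have "max (l * ereal y) (u * ereal y) = l * ereal y" by (rule max_absorb1)
    then show ?thesis using l' 2 by (simp add: cf_def)
  next
    case 3
    then show ?thesis using assms by (simp add: cf_def zero_ereal_def[symmetric])
  qed
qed

lemma cf_shat:
  fixes l u :: ereal
  assumes "l \<le> 0" "0 \<le> u" "max (l * ereal k) (u * ereal k) \<noteq> \<infinity>" "k \<noteq> 0"
  shows "ereal (s + cf l u k) = (if k < 0 then ereal s + l else ereal s + u)"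
proof (cases "k > 0")
  case True
  have "u \<noteq> \<infinity>" using assms(3) True by auto
  then obtain u' where u': "u = ereal u'" using assms(2) by (cases u) auto
  then show ?thesis using True by (simp add: cf_def)
next
  case False
  then have k: "k < 0" using assms(4) by simp
  have "l \<noteq> -\<infinity>" using assms(3) k assms(2)
    by (cases u) (auto simp: max_def split: if_splits)
  then obtain l' where "l = ereal l'" using assms(1) by (cases l) auto
  then show ?thesis using k by (simp add: cf_def)
qed

definition ind :: "'n \<Rightarrow> 'n \<Rightarrow> 'n \<Rightarrow> 'n \<Rightarrow> real" where
  "ind i j a b = (if a = i \<and> b = j then 1 else 0)"

lemma sum_ind: fixes i j :: "'n::finite" shows "(\<Sum>a\<in>UNIV. \<Sum>b\<in>UNIV. f a b * ind i j a b) = (f i j :: real)"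
proof -
  have "f a b * ind i j a b = (if a = i then (if b = j then f a b else 0) else 0)" for a b
    by (simp add: ind_def)
  then show ?thesis by (simp add: sum_if_const sum.delta)
qed

lemma sum_ind': fixes i j :: "'n::finite" shows "(\<Sum>a\<in>UNIV. \<Sum>b\<in>UNIV. f a b * ind i j b a) = (f j i :: real)"
proof -
  have "f a b * ind i j b a = (if a = j then (if b = i then f a b else 0) else 0)" for a b
    by (auto simp: ind_def)
  then show ?thesis by (simp add: sum_if_const sum.delta)
qed

lemma matrix_diff_ldistrib:
  fixes A B C :: "real^'n^'n"
  shows "A ** (B - C) = A ** B - A ** C"
  by (simp add: vec_eq_iff matrix_matrix_mult_def sum_subtractf algebra_simps)

lemma matrix_diff_rdistrib:
  fixes A B C :: "real^'n^'n"
  shows "(B - C) ** A = B ** A - C ** A"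
  by (simp add: vec_eq_iff matrix_matrix_mult_def sum_subtractf algebra_simps)

lemma matrix_scaleR_right:
  fixes A B :: "real^'n^'n"
  shows "A ** (t *\<^sub>R B) = t *\<^sub>R (A ** B)"
  by (simp add: vec_eq_iff matrix_matrix_mult_def sum_distrib_left algebra_simps)

lemma trace_lin:
  fixes S K E :: "real^'n^'n"
  shows "trace (S ** (K + t *\<^sub>R E)) = trace (S ** K) + t * trace (S ** E)"
  by (simp add: matrix_add_ldistrib matrix_scaleR_right trace_add trace_def sum_distrib_left sum.distrib)

lemma trace_entry: "trace (X ** Y) = (\<Sum>a\<in>UNIV. \<Sum>b\<in>UNIV. X$a$b * Y$b$a)"
  by (simp add: trace_def matrix_matrix_mult_def)



lemma pd_diag:
  fixes A :: "real^'n^'n"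
  assumes "pd_mat A" shows "0 < A$i$i"
proof -
  have "axis i (1::real) \<noteq> 0" by (simp add: axis_eq_0_iff)
  then have "0 < qf A (axis i 1)" using assms unfolding pd_mat_def inner_qf by auto
  moreover have "qf A (axis i 1) = A$i$i"
  proof -
    have "axis i (1::real) $ a * A$a$b * axis i 1 $ b = (if a = i then (if b = i then A$i$i else 0) else 0)" for a b
      by (simp add: axis_def)
    then show ?thesis by (simp add: qf_def sum_if_const)
  qed
  ultimately show ?thesis by simp
qed

lemma pd_mat_1: "pd_mat (mat 1 :: real^'n^'n)"
proof -
  have "0 < x \<bullet> (mat 1 *v x)" if "x \<noteq> 0" for x :: "real^'n"
    using that by simp
  then show ?thesis by (auto simp: pd_mat_def sym_mat_def mat_def)
qed

lemma pen_obj_1: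
  fixes S :: "real^'n^'n"
  shows "pen_obj S L U (mat 1) = ereal (trace S)"
proof -
  have "(\<Sum>i\<in>UNIV. \<Sum>j\<in>UNIV - {i}.
        max (L $ i $ j * ereal ((mat 1::real^'n^'n) $ i $ j)) (U $ i $ j * ereal ((mat 1::real^'n^'n) $ i $ j))) = 0"
    by (intro sum.neutral ballI) (auto simp: mat_def zero_ereal_def[symmetric])
  then show ?thesis by (simp add: pen_obj_def)
qed



theorem corollary8p10:
  fixes S Khat :: "real^'n^'n" and L U :: "ereal^'n^'n"
  assumes "psd_mat S"
    and "sym_mat L" and "sym_mat U"
    and "\<And>i j. i \<noteq> j \<Longrightarrow> L $ i $ j \<le> 0 \<and> 0 \<le> U $ i $ j"
    and "\<And>i. L $ i $ i = 0" and "\<And>i. U $ i $ i = 0"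
    and "pd_mat Khat"
    and "\<And>K. pd_mat K \<Longrightarrow> pen_obj S L U Khat \<le> pen_obj S L U K"
  shows "ggm_mle (\<lambda>i j. i \<noteq> j \<and> Khat $ i $ j \<noteq> 0) (shat S L U Khat) Khat
    \<and> (\<forall>K. ggm_mle (\<lambda>i j. i \<noteq> j \<and> Khat $ i $ j \<noteq> 0) (shat S L U Khat) K \<longrightarrow> K = Khat)"
proof -
  have pdK: "pd_mat Khat" by (rule assms(7))
  have symK: "sym_mat Khat" using pdK by (simp add: pd_mat_def)
  have symS: "sym_mat S" using assms(1) by (simp add: psd_mat_def)
  have invK: "invertible Khat" by (rule pd_invertible[OF pdK])
  define Sg where "Sg = matrix_inv Khat"
  have pdSg: "pd_mat Sg" unfolding Sg_def by (rule pd_inv[OF pdK])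
  have symSg: "sym_mat Sg" using pdSg by (simp add: pd_mat_def)
  have LU: "L$a$b \<le> 0 \<and> 0 \<le> U$a$b" for a b
    using assms(4)[of a b] assms(5)[of a] assms(6)[of a] by (cases "a = b") auto
  define T where "T a b = max (L$a$b * ereal (Khat$a$b)) (U$a$b * ereal (Khat$a$b))" for a b
  have Tfin: "T a b \<noteq> \<infinity>" for a b
  proof (cases "a = b")
    case True
    then show ?thesis using assms(5,6) by (simp add: T_def)
  next
    case False
    have le: "pen_obj S L U Khat \<le> ereal (trace S)"
      using assms(8)[OF pd_mat_1] pen_obj_1 by metis
    have pe: "pen_obj S L U Khat = ereal (- ln (det Khat) + trace (S ** Khat)) + (\<Sum>a\<in>UNIV. \<Sum>b\<in>UNIV - {a}. T a b)"
      by (simp add: pen_obj_def T_def)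
    have "(\<Sum>a\<in>UNIV. \<Sum>b\<in>UNIV - {a}. T a b) \<noteq> \<infinity>"
    proof
      assume "(\<Sum>a\<in>UNIV. \<Sum>b\<in>UNIV - {a}. T a b) = \<infinity>"
      then have "pen_obj S L U Khat = \<infinity>" using pe by simp
      then show False using le by simp
    qed
    then have "\<forall>a. (\<Sum>b\<in>UNIV - {a}. T a b) \<noteq> \<infinity>" by (simp add: sum_Pinfty)
    then have "\<forall>a. \<forall>b\<in>UNIV - {a}. T a b \<noteq> \<infinity>" by (simp add: sum_Pinfty)
    then show ?thesis using False by auto
  qed
  define c where "c a b = cf (L$a$b) (U$a$b) (Khat$a$b)" for a b
  have csym: "c a b = c b a" for a b
    using assms(2,3) symK by (simp add: c_def sym_mat_def)
  have cdiag: "c a a = 0" for a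
    using assms(5,6) by (simp add: c_def cf_def)
  have key: "Sg$i$j = S$i$j + c i j" if ij: "i = j \<or> Khat$i$j \<noteq> 0" for i j
  proof -
    define E :: "real^'n^'n" where "E = (\<chi> a b. ind i j a b + (if i \<noteq> j then ind j i a b else 0))"
    have "ind i j a b + (if i \<noteq> j then ind j i a b else 0) = ind i j b a + (if i \<noteq> j then ind j i b a else 0)" for a b
      unfolding ind_def by (cases "i = j") auto
    then have symE: "sym_mat E" unfolding sym_mat_def E_def by simp
    obtain \<delta>1 where d1: "\<delta>1 > 0" "\<forall>t. \<bar>t\<bar> < \<delta>1 \<longrightarrow> pd_mat (Khat + t *\<^sub>R E)"
      using pd_perturb[OF pdK symE] by blast
    define \<delta> where "\<delta> = (if i = j then \<delta>1 else min \<delta>1 \<bar>Khat$i$j\<bar>)"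
    have d0: "\<delta> > 0" using d1 ij by (auto simp: \<delta>_def)
    define \<psi> where "\<psi> t = - ln (det (Khat + t *\<^sub>R E)) + trace (S ** (Khat + t *\<^sub>R E))
        + (\<Sum>a\<in>UNIV. \<Sum>b\<in>UNIV - {a}. c a b * (Khat$a$b + t * E$a$b))" for t
    have pen\<psi>: "pen_obj S L U (Khat + t *\<^sub>R E) = ereal (\<psi> t)" if t: "\<bar>t\<bar> < \<delta>" for t
    proof -
      have tm: "max (L$a$b * ereal ((Khat + t *\<^sub>R E)$a$b)) (U$a$b * ereal ((Khat + t *\<^sub>R E)$a$b))
          = ereal (c a b * (Khat$a$b + t * E$a$b))" if ba: "b \<noteq> a" for a b
      proof -
        have ent: "(Khat + t *\<^sub>R E)$a$b = Khat$a$b + t * E$a$b" by simp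
        have sgn: "(Khat$a$b > 0 \<longrightarrow> Khat$a$b + t * E$a$b > 0) \<and> (Khat$a$b < 0 \<longrightarrow> Khat$a$b + t * E$a$b < 0)
            \<and> (Khat$a$b = 0 \<longrightarrow> Khat$a$b + t * E$a$b = 0)"
        proof (cases "E$a$b = 0")
          case True then show ?thesis by simp
        next
          case False
          then have ij': "i \<noteq> j" and ab: "(a = i \<and> b = j) \<or> (a = j \<and> b = i)"
            using ba by (auto simp: E_def ind_def split: if_splits)
          then have Eab: "E$a$b = 1" by (auto simp: E_def ind_def)
          have Kab: "Khat$a$b = Khat$i$j" using ab symK by (auto simp: sym_mat_def)
          have "\<bar>t\<bar> < \<bar>Khat$i$j\<bar>" using t ij' by (simp add: \<delta>_def)
          then show ?thesis using Kab Eab by auto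
        qed
        show ?thesis unfolding ent c_def
          by (rule term_eq) (use LU Tfin sgn in \<open>auto simp: T_def\<close>)
      qed
      have "(\<Sum>a\<in>UNIV. \<Sum>b\<in>UNIV - {a}.
          max (L$a$b * ereal ((Khat + t *\<^sub>R E)$a$b)) (U$a$b * ereal ((Khat + t *\<^sub>R E)$a$b)))
          = (\<Sum>a\<in>UNIV. \<Sum>b\<in>UNIV - {a}. ereal (c a b * (Khat$a$b + t * E$a$b)))"
        by (intro sum.cong refl) (use tm in auto)
      then show ?thesis by (simp add: pen_obj_def \<psi>_def)
    qed
    have minpsi: "\<forall>y. \<bar>0 - y\<bar> < \<delta> \<longrightarrow> \<psi> 0 \<le> \<psi> y"
    proof (intro allI impI)
      fix y assume y: "\<bar>0 - y\<bar> < \<delta>"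
      then have "pd_mat (Khat + y *\<^sub>R E)" using d1 by (auto simp: \<delta>_def split: if_splits)
      then have "pen_obj S L U Khat \<le> pen_obj S L U (Khat + y *\<^sub>R E)" by (rule assms(8))
      moreover have "pen_obj S L U Khat = ereal (\<psi> 0)" using pen\<psi>[of 0] d0 by simp
      ultimately show "\<psi> 0 \<le> \<psi> y" using pen\<psi>[of y] y by simp
    qed
    define g where "g t = det (mat 1 + t *\<^sub>R (Sg ** E))" for t
    have detK: "0 < det Khat" by (rule pd_det_pos[OF pdK])
    have deq: "det (Khat + t *\<^sub>R E) = det Khat * g t" for t
    proof -
      have "Khat ** (mat 1 + t *\<^sub>R (Sg ** E)) = Khat + t *\<^sub>R E"
        using inv_props(1)[OF invK]
        by (simp add: matrix_add_ldistrib matrix_scaleR_right matrix_mul_assoc Sg_def)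
      then show ?thesis unfolding g_def by (metis det_mul)
    qed
    have \<psi>eq: "\<psi> = (\<lambda>t. - ln (det Khat * g t) + (trace (S ** Khat) + t * trace (S ** E))
        + (\<Sum>a\<in>UNIV. \<Sum>b\<in>UNIV - {a}. c a b * (Khat$a$b + t * E$a$b)))"
      by (simp add: fun_eq_iff \<psi>_def deq trace_lin)
    have g0: "g 0 = 1" by (simp add: g_def)
    have dg: "(g has_real_derivative trace (Sg ** E)) (at 0)"
      unfolding g_def by (rule deriv_det_id)
    have "(\<psi> has_real_derivative
        (- (det Khat * trace (Sg ** E)) / (det Khat * g 0) + trace (S ** E)
          + (\<Sum>a\<in>UNIV. \<Sum>b\<in>UNIV - {a}. c a b * E$a$b))) (at 0)"
      unfolding \<psi>eq
      by (auto intro!: derivative_eq_intros dg simp: g0 detK) (simp_all add: mult.commute)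
    then have "- (det Khat * trace (Sg ** E)) / (det Khat * g 0) + trace (S ** E)
          + (\<Sum>a\<in>UNIV. \<Sum>b\<in>UNIV - {a}. c a b * E$a$b) = 0"
      using DERIV_local_min d0 minpsi by blast
    then have eq0: "- trace (Sg ** E) + trace (S ** E) + (\<Sum>a\<in>UNIV. \<Sum>b\<in>UNIV - {a}. c a b * E$a$b) = 0"
      using detK g0 by simp
    have trE: "trace (X ** E) = X$j$i + (if i \<noteq> j then X$i$j else 0)" for X :: "real^'n^'n"
    proof -
      have "trace (X ** E) = (\<Sum>a\<in>UNIV. \<Sum>b\<in>UNIV. X$a$b * ind i j b a)
          + (if i \<noteq> j then (\<Sum>a\<in>UNIV. \<Sum>b\<in>UNIV. X$a$b * ind j i b a) else 0)"
        by (simp add: trace_entry E_def distrib_left sum.distrib)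
      then show ?thesis by (simp add: sum_ind')
    qed
    have pE: "(\<Sum>a\<in>UNIV. \<Sum>b\<in>UNIV - {a}. c a b * E$a$b) = c i j + (if i \<noteq> j then c j i else 0)"
    proof -
      have "(\<Sum>a\<in>UNIV. \<Sum>b\<in>UNIV - {a}. c a b * E$a$b) = (\<Sum>a\<in>UNIV. \<Sum>b\<in>UNIV. c a b * E$a$b)"
        by (rule sum.cong[OF refl]) (subst sum_diff1, simp_all add: cdiag)
      also have "\<dots> = (\<Sum>a\<in>UNIV. \<Sum>b\<in>UNIV. c a b * ind i j a b)
          + (if i \<noteq> j then (\<Sum>a\<in>UNIV. \<Sum>b\<in>UNIV. c a b * ind j i a b) else 0)"
        by (simp add: E_def distrib_left sum.distrib)
      finally show ?thesis by (simp add: sum_ind)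
    qed
    have s1: "Sg$j$i = Sg$i$j" using symSg by (simp add: sym_mat_def)
    have s2: "S$j$i = S$i$j" using symS by (simp add: sym_mat_def)
    show ?thesis
      using eq0 unfolding trE pE using s1 s2 csym[of j i] cdiag[of i]
      by (cases "i = j") auto
  qed
  have supp: "ereal (Sg$i$j) = shat S L U Khat i j" if ij: "i = j \<or> Khat$i$j \<noteq> 0" for i j
  proof -
    have k0: "Khat$i$j \<noteq> 0" using ij pd_diag[OF pdK, of i] by auto
    show ?thesis unfolding key[OF ij] shat_def c_def
      by (rule cf_shat) (use LU Tfin k0 in \<open>auto simp: T_def\<close>)
  qed
  have part1: "ggm_mle (\<lambda>i j. i \<noteq> j \<and> Khat $ i $ j \<noteq> 0) (shat S L U Khat) Khat"
    unfolding ggm_mle_def using pdK supp by (auto simp: Sg_def)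
  have part2: "K = Khat" if K: "ggm_mle (\<lambda>i j. i \<noteq> j \<and> Khat $ i $ j \<noteq> 0) (shat S L U Khat) K" for K
  proof -
    have pdK2: "pd_mat K" and zK: "\<And>a b. a \<noteq> b \<Longrightarrow> Khat$a$b = 0 \<Longrightarrow> K$a$b = 0"
      and iK: "\<And>a b. a = b \<or> Khat$a$b \<noteq> 0 \<Longrightarrow> ereal (matrix_inv K $a$b) = shat S L U Khat a b"
      using K unfolding ggm_mle_def by auto
    define Si where "Si = matrix_inv K"
    have pdSi: "pd_mat Si" unfolding Si_def by (rule pd_inv[OF pdK2])
    have invK2: "invertible K" by (rule pd_invertible[OF pdK2])
    define D where "D = K - Khat"
    have symD: "sym_mat D" using pdK2 pdK by (simp add: D_def pd_mat_def sym_mat_def)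
    have "Si ** D ** Sg = Sg - Si"
    proof -
      have "Si ** D ** Sg = (Si ** K) ** Sg - Si ** (Khat ** Sg)"
        by (simp add: D_def matrix_diff_ldistrib matrix_diff_rdistrib matrix_mul_assoc)
      also have "\<dots> = Sg - Si"
        using inv_props(2)[OF invK2] inv_props(1)[OF invK] by (simp add: Si_def Sg_def)
      finally show ?thesis .
    qed
    moreover have "trace ((Sg - Si) ** transpose D) = 0"
    proof -
      have z: "(Sg - Si)$a$b * D$a$b = 0" for a b
      proof (cases "a = b \<or> Khat$a$b \<noteq> 0")
        case True
        then have "Si$a$b = Sg$a$b" using iK[OF True] supp[OF True] unfolding Si_def by (metis ereal.inject)
        then show ?thesis by simp
      next
        case False
        then show ?thesis using zK[of a b] by (simp add: D_def)
      qed
      have "trace ((Sg - Si) ** transpose D) = (\<Sum>a\<in>UNIV. \<Sum>b\<in>UNIV. (Sg - Si)$a$b * D$a$b)"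
        by (simp add: trace_entry transpose_def)
      also have "\<dots> = 0" by (simp only: z sum.neutral_const)
      finally show ?thesis .
    qed
    ultimately have "D = 0" using trace_pos_unique[OF pdSi pdSg symD] by simp
    then show ?thesis by (simp add: D_def)
  qed
  show ?thesis using part1 part2 by blast
qed

end
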